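(* Let $m>1$ be an integer that is not a prime power, with prime factorization $m=p_1^{e_1}p_2^{e_2}\cdots p_r^{e_r}$ ($r\ge 2$ distinct primes). There is a constant $c>0$ depending only on $m$ such that for every $n\ge 3$ the following holds. Let $X=\{x_{ij}\}$ be the $n\times n$ matrix whose entries are distinct indeterminates over $\mathbb{Z}_m$. Then there exist effectively computable constant $n\times t$ matrices $B$ and $C$ over $\mathbb{Z}_m$, where $$t\le \exp\Big(c\,\sqrt[r]{\log n\,(\log\log n)^{r-1}}\Big)\quad(\text{in particular } t=n^{o(1)}),$$ such that the $n\times n$ matrix $CB^TX$ is a 1-a-strong representation of the matrix $X$ modulo $m$. Moreover, every row of $CB^TX$ is a linear combination (with coefficients in $\mathbb{Z}_m$) of the rows of $X$.
   Context: $\mathbb{Z}_m$ denotes the ring of integers modulo $m=p_1^{e_1}\cdots p_\ell^{e_\ell}$. For polynomials $f=\sum_I a_I x_I$ and $g=\sum_I b_I x_I$ over $\mathbb{Z}_m$ (sums over monomials $x_I$), $g$ is an alternative representation of $f$ modulo $m$ if for every monomial $I$ there is some $j$ with $a_I\equiv b_I \pmod{p_j^{e_j}}$; $g$ is a 1-a-strong representation of $f$ modulo $m$ if it is an alternative representation and, whenever $a_I\not\equiv b_I\pmod{p_i^{e_i}}$ for some $i$, then $a_I\equiv 0\pmod m$. A matrix $D=\{d_{ij}\}$ whose entries are polynomials in the indeterminates $\{x_{ij}\}$ is a 1-a-strong representation of the matrix $X=\{x_{ij}\}$ modulo $m$ if for all $1\le i,j\le n$ the polynomial $d_{ij}$ is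 a 1-a-strong representation of the polynomial $x_{ij}$ modulo $m$. *)

theory Defs
  imports Complex_Main "HOL-Library.Poly_Mapping" "HOL-Computational_Algebra.Primes"
    "HOL-Number_Theory.Cong"
begin

text \<open>Monomials in the indeterminates x_ij (indexed by pairs (i,j)) and polynomials
  over Z_m, represented by their integer coefficient functions (coefficients are
  only compared modulo m and modulo the prime powers of m).\<close>

type_synonym mono = "(nat \<times> nat) \<Rightarrow>\<^sub>0 nat"
type_synonym zpoly = "mono \<Rightarrow> int"

definition ppow :: "nat \<Rightarrow> nat \<Rightarrow> int" where
  "ppow m p = int (p ^ multiplicity p m)"

definition alt_rep :: "nat \<Rightarrow> zpoly \<Rightarrow> zpoly \<Rightarrow> bool" where
  "alt_rep m g f \<longleftrightarrow> (\<forall>I. \<exists>p\<in>prime_factors m. [f I = g I] (mod ppow m p))"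

definition one_a_strong_rep :: "nat \<Rightarrow> zpoly \<Rightarrow> zpoly \<Rightarrow> bool" where
  "one_a_strong_rep m g f \<longleftrightarrow> alt_rep m g f \<and>
     (\<forall>I. (\<exists>p\<in>prime_factors m. \<not> [f I = g I] (mod ppow m p)) \<longrightarrow> [f I = 0] (mod int m))"

definition var :: "nat \<Rightarrow> nat \<Rightarrow> zpoly" where
  "var i j = (\<lambda>I. if I = Poly_Mapping.single (i, j) 1 then 1 else 0)"

definition CBtX :: "nat \<Rightarrow> nat \<Rightarrow> (nat \<Rightarrow> nat \<Rightarrow> int) \<Rightarrow> (nat \<Rightarrow> nat \<Rightarrow> int)
    \<Rightarrow> nat \<Rightarrow> nat \<Rightarrow> zpoly" where
  "CBtX n t C B i j = (\<lambda>I. \<Sum>k<n. (\<Sum>l<t. C i l * B k l) * var k j I)"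

definition matrix_one_a_strong_rep :: "nat \<Rightarrow> nat \<Rightarrow> (nat \<Rightarrow> nat \<Rightarrow> zpoly) \<Rightarrow> bool" where
  "matrix_one_a_strong_rep m n D \<longleftrightarrow>
     (\<forall>i<n. \<forall>j<n. one_a_strong_rep m (D i j) (var i j))"

end

theory Submission
  imports Defs "HOL-Library.Nat_Bijection"
begin

definition Fq :: "nat \<Rightarrow> nat \<Rightarrow> int" where
  "Fq q s = (\<Sum>a<q. (-1)^a * int (s choose a))"

lemma Fq_0: "q > 0 \<Longrightarrow> Fq q 0 = 1"
proof -
  assume "q > 0"
  have "Fq q 0 = (\<Sum>a\<in>{0}. (-1)^a * int (0 choose a))"
    unfolding Fq_def using \<open>q>0\<close> by (intro sum.mono_neutral_right) auto
  then show ?thesis by simp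
qed

lemma Fq_small: assumes "0 < s" "s < q" shows "Fq q s = 0"
proof -
  have "Fq q s = (\<Sum>a\<le>s. (-1)^a * int (s choose a))"
    unfolding Fq_def using assms by (intro sum.mono_neutral_right) auto
  also have "\<dots> = 0" using choose_alternating_sum[OF assms(1), where 'a=int] by simp
  finally show ?thesis .
qed

lemma prime_dvd_choose_pow:
  assumes p: "prime (p::nat)" and b: "0 < b" "b < p^k"
  shows "p dvd (p^k choose b)"
proof (rule ccontr)
  assume nd: "\<not> p dvd (p^k choose b)"
  have "coprime (p^k) (p^k choose b)"
    using nd p by (simp add: prime_imp_coprime coprime_commute)
  moreover have "p^k dvd b * (p^k choose b)"
    using times_binomial_minus1_eq[OF b(1), of "p^k"] by simp
  ultimately have "p^k dvd b" using coprime_dvd_mult_left_iff by blast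
  with b show False by (simp add: nat_dvd_not_less)
qed

lemma choose_period:
  assumes p: "prime (p::nat)" and a: "a < p^k"
  shows "[(s + p^k) choose a = s choose a] (mod p)"
proof -
  have "(s + p^k) choose a = (\<Sum>j\<le>a. (p^k choose j) * (s choose (a - j)))"
    using vandermonde[of "p^k" s a] by (simp add: add.commute)
  also have "\<dots> = (\<Sum>j\<in>{0}. (p^k choose j) * (s choose (a - j))) + (\<Sum>j\<in>{1..a}. (p^k choose j) * (s choose (a - j)))"
  proof -
    have "{..a} = {0} \<union> {1..a}" by auto
    then show ?thesis by (simp add: sum.union_disjoint)
  qed
  also have "[\<dots> = (s choose a) + 0] (mod p)"
  proof (rule cong_add)
    show "[(\<Sum>j\<in>{0}. (p^k choose j) * (s choose (a - j))) = s choose a] (mod p)" by simp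
    have "\<forall>j\<in>{1..a}. p dvd (p^k choose j) * (s choose (a - j))"
      using prime_dvd_choose_pow[OF p] a by auto
    then have "p dvd (\<Sum>j\<in>{1..a}. (p^k choose j) * (s choose (a - j)))"
      by (intro dvd_sum) auto
    then show "[(\<Sum>j\<in>{1..a}. (p^k choose j) * (s choose (a - j))) = 0] (mod p)"
      by (simp add: cong_0_iff)
  qed
  finally show ?thesis by simp
qed

lemma Fq_period:
  assumes p: "prime (p::nat)"
  shows "[Fq (p^k) (s + p^k) = Fq (p^k) s] (mod int p)"
  unfolding Fq_def
proof (rule cong_sum, rule cong_mult)
  fix a assume "a \<in> {..<p^k}"
  then have "[(s + p^k) choose a = s choose a] (mod p)" using choose_period[OF p] by auto
  then show "[int ((s + p ^ k) choose a) = int (s choose a)] (mod int p)"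
    using cong_int_iff by blast
qed simp

lemma Fq_mod:
  assumes p: "prime (p::nat)"
  shows "[Fq (p^k) s = Fq (p^k) (s mod p^k)] (mod int p)"
proof (induction s rule: less_induct)
  case (less s)
  show ?case
  proof (cases "s < p^k")
    case True then show ?thesis by simp
  next
    case False
    then obtain s' where s': "s = s' + p^k" by (metis add.commute le_add_diff_inverse not_less)
    have pk: "p^k > 0" using p prime_gt_0_nat by simp
    have "[Fq (p^k) s = Fq (p^k) s'] (mod int p)" using Fq_period[OF p] s' by simp
    moreover have "[Fq (p^k) s' = Fq (p^k) (s' mod p^k)] (mod int p)" using less s' pk by simp
    moreover have "s mod p^k = s' mod p^k" using s' by simp
    ultimately show ?thesis using cong_trans by metis
  qed
qed

lemma Fq_nondvd:
  assumes p: "prime (p::nat)" and nd: "\<not> p^k dvd s"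
  shows "[Fq (p^k) s = 0] (mod int p)"
proof -
  have pk: "p^k > 0" using p prime_gt_0_nat by simp
  have "s mod p^k > 0" using nd by (simp add: dvd_eq_mod_eq_0)
  moreover have "s mod p^k < p^k" using pk by simp
  ultimately have "Fq (p^k) (s mod p^k) = 0" by (rule Fq_small)
  then show ?thesis using Fq_mod[OF p, of k s] by simp
qed

lemma Fq_set:
  assumes U: "finite U" and Y: "Y \<subseteq> U"
  shows "Fq q (card Y) = (\<Sum>T\<in>{T. T \<subseteq> U \<and> card T < q}. (-1)^card T * (if T \<subseteq> Y then 1 else 0))"
proof -
  have fY: "finite Y" using U Y finite_subset by blast
  have "(\<Sum>T\<in>{T. T \<subseteq> U \<and> card T < q}. (-1)^card T * (if T \<subseteq> Y then 1 else 0)) =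
        (\<Sum>T\<in>{T. T \<subseteq> Y \<and> card T < q}. (-1::int)^card T)"
  proof -
    have "(\<Sum>T\<in>{T. T \<subseteq> U \<and> card T < q}. (-1::int)^card T * (if T \<subseteq> Y then 1 else 0)) =
        (\<Sum>T\<in>{T. T \<subseteq> Y \<and> card T < q}. (-1::int)^card T * (if T \<subseteq> Y then 1 else 0))"
      using Y U by (intro sum.mono_neutral_right) auto
    then show ?thesis by simp
  qed
  also have "\<dots> = (\<Sum>a<q. \<Sum>T\<in>{T. T \<in> {T. T \<subseteq> Y \<and> card T < q} \<and> card T = a}. (-1::int)^card T)"
    by (rule sum.group[symmetric]) (use fY in auto)
  also have "\<dots> = (\<Sum>a<q. (-1)^a * int (card Y choose a))"
  proof (rule sum.cong[OF refl])
    fix a assume "a \<in> {..<q}"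
    then have "{T. T \<in> {T. T \<subseteq> Y \<and> card T < q} \<and> card T = a} = {T. T \<subseteq> Y \<and> card T = a}" by auto
    then show "(\<Sum>T\<in>{T. T \<in> {T. T \<subseteq> Y \<and> card T < q} \<and> card T = a}. (-1::int)^card T) = (-1)^a * int (card Y choose a)"
      using n_subsets[OF fY, of a] by simp
  qed
  finally show ?thesis unfolding Fq_def by simp
qed

definition rep :: "nat \<Rightarrow> (nat \<Rightarrow> nat \<Rightarrow> int) \<Rightarrow> bool" where
  "rep t A \<longleftrightarrow> (\<exists>(S::nat set) f g. finite S \<and> card S \<le> t \<and> (\<forall>i k. A i k = (\<Sum>x\<in>S. f i x * g k x)))"

lemma repE:
  assumes "rep t A"
  obtains S f g where "finite (S::nat set)" "card S \<le> t" "\<forall>i k. A i k = (\<Sum>x\<in>S. f i x * g k x)"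
  using assms unfolding rep_def by auto

lemma repI:
  assumes "finite (S::nat set)" "card S \<le> t" "\<And>i k. A i k = (\<Sum>x\<in>S. f i x * g k x)"
  shows "rep t A"
  unfolding rep_def using assms by (intro exI[of _ S] exI[of _ f] exI[of _ g]) auto

lemma rep_mono: "rep t A \<Longrightarrow> t \<le> t' \<Longrightarrow> rep t' A"
  by (elim repE) (rule repI, assumption, simp, simp)

lemma rep_one: "rep 1 (\<lambda>i k. 1)"
  by (rule repI[of "{0}" _ _ "\<lambda>_ _. 1" "\<lambda>_ _. 1"]) simp_all

lemma rep_scale: "rep t A \<Longrightarrow> rep t (\<lambda>i k. c * A i k)"
proof -
  assume "rep t A"
  then obtain S f g where *: "finite (S::nat set)" "card S \<le> t" "\<forall>i k. A i k = (\<Sum>x\<in>S. f i x * g k x)"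
    by (rule repE)
  show ?thesis
    by (rule repI[OF *(1,2), of _ "\<lambda>i x. c * f i x" g]) (use *(3) in \<open>simp add: sum_distrib_left mult.assoc\<close>)
qed

lemma sum_split_helper:
  fixes S1 S2 :: "nat set" and f1 f2 g1 g2 :: "nat \<Rightarrow> nat \<Rightarrow> int"
  assumes 1: "finite S1" and 2: "finite S2"
  shows "(\<Sum>x\<in>(\<lambda>x. 2*x) ` S1 \<union> (\<lambda>x. Suc (2*x)) ` S2.
      (if even x then f1 i (x div 2) else f2 i (x div 2)) * (if even x then g1 k (x div 2) else g2 k (x div 2)))
    = (\<Sum>x\<in>S1. f1 i x * g1 k x) + (\<Sum>x\<in>S2. f2 i x * g2 k x)"
proof -
  have disj: "(\<lambda>x. 2*x) ` S1 \<inter> (\<lambda>x. Suc (2*x)) ` S2 = {}" by (auto dest: arg_cong[where f=even])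
  have inj1: "inj_on (\<lambda>x::nat. 2*x) S1" by (auto simp: inj_on_def)
  have inj2: "inj_on (\<lambda>x::nat. Suc (2*x)) S2" by (auto simp: inj_on_def)
  show ?thesis
    using 1 2 disj by (simp add: sum.union_disjoint sum.reindex[OF inj1] sum.reindex[OF inj2])
qed

lemma card_split_helper:
  fixes S1 S2 :: "nat set"
  assumes 1: "finite S1" "card S1 \<le> t1" and 2: "finite S2" "card S2 \<le> t2"
  shows "card ((\<lambda>x. 2*x) ` S1 \<union> (\<lambda>x. Suc (2*x)) ` S2) \<le> t1 + t2"
  using 1 2 card_Un_le[of "(\<lambda>x. 2*x) ` S1" "(\<lambda>x. Suc (2*x)) ` S2"]
      card_image_le[OF 1(1), of "\<lambda>x. 2*x"] card_image_le[OF 2(1), of "\<lambda>x. Suc (2*x)"] by linarith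

lemma rep_add:
  assumes "rep t1 A" "rep t2 B"
  shows "rep (t1 + t2) (\<lambda>i k. A i k + B i k)"
proof -
  obtain S1 f1 g1 where 1: "finite (S1::nat set)" "card S1 \<le> t1" "\<forall>i k. A i k = (\<Sum>x\<in>S1. f1 i x * g1 k x)"
    using assms(1) by (rule repE)
  obtain S2 f2 g2 where 2: "finite (S2::nat set)" "card S2 \<le> t2" "\<forall>i k. B i k = (\<Sum>x\<in>S2. f2 i x * g2 k x)"
    using assms(2) by (rule repE)
  define S where "S = (\<lambda>x. 2*x) ` S1 \<union> (\<lambda>x. Suc (2*x)) ` S2"
  define f where "f = (\<lambda>i x. (if even x then f1 i (x div 2) else f2 i (x div 2)))"
  define g where "g = (\<lambda>k x. (if even x then g1 k (x div 2) else g2 k (x div 2)))"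
  have "finite S" unfolding S_def using 1(1) 2(1) by simp
  moreover have "card S \<le> t1 + t2" unfolding S_def by (rule card_split_helper[OF 1(1,2) 2(1,2)])
  moreover have "\<forall>i k. A i k + B i k = (\<Sum>x\<in>S. f i x * g k x)"
  proof (intro allI)
    fix i k
    have "(\<Sum>x\<in>S. f i x * g k x) = (\<Sum>x\<in>S1. f1 i x * g1 k x) + (\<Sum>x\<in>S2. f2 i x * g2 k x)"
      unfolding S_def f_def g_def by (rule sum_split_helper[OF 1(1) 2(1)])
    then show "A i k + B i k = (\<Sum>x\<in>S. f i x * g k x)" using 1(3) 2(3) by simp
  qed
  ultimately show ?thesis by (intro repI[of S _ _ f g]) auto
qed

lemma rep_mult:
  assumes "rep t1 A" "rep t2 B"
  shows "rep (t1 * t2) (\<lambda>i k. A i k * B i k)"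
proof -
  obtain S1 f1 g1 where 1: "finite (S1::nat set)" "card S1 \<le> t1" "\<forall>i k. A i k = (\<Sum>x\<in>S1. f1 i x * g1 k x)"
    using assms(1) by (rule repE)
  obtain S2 f2 g2 where 2: "finite (S2::nat set)" "card S2 \<le> t2" "\<forall>i k. B i k = (\<Sum>x\<in>S2. f2 i x * g2 k x)"
    using assms(2) by (rule repE)
  define S where "S = prod_encode ` (S1 \<times> S2)"
  define f where "f i x = f1 i (fst (prod_decode x)) * f2 i (snd (prod_decode x))" for i x
  define g where "g k x = g1 k (fst (prod_decode x)) * g2 k (snd (prod_decode x))" for k x
  have "finite S" using 1 2 S_def by simp
  moreover have "card S \<le> t1 * t2"
  proof -
    have "card S \<le> card (S1 \<times> S2)" unfolding S_def using 1 2 by (intro card_image_le) simp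
    also have "\<dots> = card S1 * card S2" by (rule card_cartesian_product)
    also have "\<dots> \<le> t1 * t2" using 1 2 by (intro mult_le_mono)
    finally show ?thesis .
  qed
  moreover have "\<forall>i k. A i k * B i k = (\<Sum>x\<in>S. f i x * g k x)"
  proof (intro allI)
    fix i k
    have "(\<Sum>x\<in>S. f i x * g k x) = (\<Sum>z\<in>S1 \<times> S2. f1 i (fst z) * f2 i (snd z) * (g1 k (fst z) * g2 k (snd z)))"
      unfolding S_def by (simp add: sum.reindex[OF inj_prod_encode] f_def g_def)
    also have "\<dots> = (\<Sum>x\<in>S1. \<Sum>y\<in>S2. (f1 i x * g1 k x) * (f2 i y * g2 k y))"
      by (simp add: sum.cartesian_product ac_simps case_prod_beta)
    also have "\<dots> = A i k * B i k" using 1 2 by (simp add: sum_product)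
    finally show "A i k * B i k = (\<Sum>x\<in>S. f i x * g k x)" by simp
  qed
  ultimately show ?thesis by (intro repI[of S _ _ f g]) auto
qed

lemma rep_pow: "rep t A \<Longrightarrow> rep (t^e) (\<lambda>i k. A i k ^ e)"
proof (induction e)
  case 0 then show ?case using rep_one by simp
next
  case (Suc e)
  then have "rep (t * t^e) (\<lambda>i k. A i k * A i k ^ e)" using rep_mult by blast
  then show ?case by simp
qed

lemma rep_sum:
  assumes "finite P" "\<And>p. p \<in> P \<Longrightarrow> rep (t p) (A p)"
  shows "rep (\<Sum>p\<in>P. t p) (\<lambda>i k. \<Sum>p\<in>P. A p i k)"
  using assms
proof (induction P rule: finite_induct)
  case empty
  have "rep 0 (\<lambda>i k. 0)" by (rule repI[of "{}" _ _ "\<lambda>_ _. 0" "\<lambda>_ _. 0"]) simp_all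
  then show ?case by simp
next
  case (insert x F)
  then have "rep (t x + (\<Sum>p\<in>F. t p)) (\<lambda>i k. A x i k + (\<Sum>p\<in>F. A p i k))"
    by (intro rep_add) auto
  then show ?case using insert by simp
qed

lemma rep_sets:
  fixes \<T> :: "nat set set"
  assumes "finite \<T>" "\<forall>T\<in>\<T>. finite T"
  shows "rep (card \<T>) (\<lambda>i k. \<Sum>T\<in>\<T>. f i T * g k T)"
proof -
  have inj: "inj_on set_encode \<T>"
    by (rule inj_on_subset[OF inj_on_set_encode]) (use assms(2) in blast)
  define S where "S = set_encode ` \<T>"
  have "finite S" "card S \<le> card \<T>" using assms S_def card_image_le by auto
  moreover have "\<forall>i k. (\<Sum>T\<in>\<T>. f i T * g k T) = (\<Sum>x\<in>S. f i (set_decode x) * g k (set_decode x))"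
    unfolding S_def using assms by (simp add: sum.reindex[OF inj])
  ultimately show ?thesis by (intro repI[of S _ _ "\<lambda>i x. f i (set_decode x)" "\<lambda>k x. g k (set_decode x)"]) auto
qed

lemma prod_dvd_pairwise_coprime:
  fixes f :: "'a \<Rightarrow> int"
  assumes "finite P" "\<And>p p'. p \<in> P \<Longrightarrow> p' \<in> P \<Longrightarrow> p \<noteq> p' \<Longrightarrow> coprime (f p) (f p')"
    "\<And>p. p \<in> P \<Longrightarrow> f p dvd x"
  shows "prod f P dvd x"
  using assms
proof (induction P rule: finite_induct)
  case empty then show ?case by simp
next
  case (insert a F)
  have "coprime (f a) (prod f F)"
    by (rule prod_coprime_right) (use insert in auto)
  moreover have "prod f F dvd x" using insert by auto
  moreover have "f a dvd x" using insert by auto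
  ultimately have "f a * prod f F dvd x" by (intro divides_mult)
  then show ?case using insert(1,2) by simp
qed

lemma prod_dvd_pairwise_coprime_nat:
  fixes f :: "'a \<Rightarrow> nat"
  assumes "finite P" "\<And>p p'. p \<in> P \<Longrightarrow> p' \<in> P \<Longrightarrow> p \<noteq> p' \<Longrightarrow> coprime (f p) (f p')"
    "\<And>p. p \<in> P \<Longrightarrow> f p dvd x"
  shows "prod f P dvd x"
  using assms
proof (induction P rule: finite_induct)
  case empty then show ?case by simp
next
  case (insert a F)
  have "coprime (f a) (prod f F)"
    by (rule prod_coprime_right) (use insert in auto)
  moreover have "prod f F dvd x" using insert by auto
  moreover have "f a dvd x" using insert by auto
  ultimately have "f a * prod f F dvd x" by (intro divides_mult)
  then show ?case using insert(1,2) by simp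
qed

lemma coprime_prime_powers:
  assumes "prime (p::nat)" "prime p'" "p \<noteq> p'"
  shows "coprime (p^a) (p'^b)"
  using assms by (simp add: primes_coprime)

lemma m_prod_ppow:
  assumes "m > 0"
  shows "int m = (\<Prod>p\<in>prime_factors m. ppow m p)"
proof -
  have "m = (\<Prod>p\<in>prime_factors m. p ^ multiplicity p m)" using prod_prime_factors[of m] assms by simp
  then have "int m = int (\<Prod>p\<in>prime_factors m. p ^ multiplicity p m)" by simp
  also have "\<dots> = (\<Prod>p\<in>prime_factors m. int (p ^ multiplicity p m))" by (rule of_nat_prod)
  finally show ?thesis unfolding ppow_def .
qed

lemma ppow_dvd_m: "ppow m p dvd int m"
  unfolding ppow_def int_dvd_int_iff by (rule multiplicity_dvd)

lemma cong_all_ppow: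
  assumes "m > 0" "\<And>p. p \<in> prime_factors m \<Longrightarrow> [x = y] (mod ppow m p)"
  shows "[x = y] (mod int m)"
proof -
  have "(\<Prod>p\<in>prime_factors m. ppow m p) dvd (y - x)"
  proof (rule prod_dvd_pairwise_coprime)
    fix p p' assume "p \<in> prime_factors m" "p' \<in> prime_factors m" "p \<noteq> p'"
    then have "prime p" "prime p'" by auto
    then show "coprime (ppow m p) (ppow m p')" unfolding ppow_def
      using \<open>p \<noteq> p'\<close> by (simp add: primes_coprime)
  next
    fix p assume "p \<in> prime_factors m"
    then show "ppow m p dvd (y - x)" using assms(2) by (simp add: cong_iff_dvd_diff dvd_diff_commute)
  qed simp
  then show ?thesis using m_prod_ppow[OF assms(1)] by (simp add: cong_iff_dvd_diff dvd_diff_commute)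
qed

lemma exists_M:
  assumes "m > 0" "p \<in> prime_factors m"
  shows "\<exists>M. [M = 1] (mod ppow m p) \<and> (\<forall>p'\<in>prime_factors m. p' \<noteq> p \<longrightarrow> ppow m p' dvd M)"
proof -
  have pr: "prime p" using assms by auto
  define a where "a = m div p ^ multiplicity p m"
  have ma: "m = a * p ^ multiplicity p m" unfolding a_def by (simp add: multiplicity_dvd)
  have nd: "\<not> p dvd a" unfolding a_def by (rule multiplicity_decompose) (use assms pr not_prime_unit in auto)
  have "coprime a (p ^ multiplicity p m)"
    using nd pr by (intro prime_imp_power_coprime)
  then have "coprime (int a) (ppow m p)" unfolding ppow_def by simp
  then obtain x where x: "[int a * x = 1] (mod ppow m p)" using cong_solve_coprime_int by blast
  have "ppow m p' dvd int a * x" if "p' \<in> prime_factors m" "p' \<noteq> p" for p'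
  proof -
    have "coprime (p' ^ multiplicity p' m) (p ^ multiplicity p m)"
      using that pr by (intro coprime_prime_powers) auto
    moreover have "p' ^ multiplicity p' m dvd a * p ^ multiplicity p m"
      using ma multiplicity_dvd[of p' m] by simp
    ultimately have "p' ^ multiplicity p' m dvd a" using coprime_dvd_mult_left_iff by blast
    then show ?thesis unfolding ppow_def
      by (metis dvd_mult2 int_dvd_int_iff of_nat_power)
  qed
  then show ?thesis using x by blast
qed

lemma exists_q:
  assumes "prime (p::nat)" "K \<ge> 1"
  shows "\<exists>k. K < p^k \<and> p^k \<le> p * K"
proof -
  have p2: "p \<ge> 2" using assms prime_ge_2_nat by blast
  have "K < 2^K" by (rule less_exp)
  also have "(2::nat)^K \<le> p^K" using p2 by (rule power_mono) simp
  finally have ex: "\<exists>k. K < p^k" by blast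
  define k where "k = (LEAST k. K < p^k)"
  have k1: "K < p^k" unfolding k_def by (rule LeastI_ex[OF ex])
  have "k \<noteq> 0"
  proof
    assume "k = 0" then show False using k1 assms by simp
  qed
  then obtain j where j: "k = Suc j" using not0_implies_Suc by blast
  have "\<not> K < p^j"
  proof
    assume "K < p^j"
    then have "k \<le> j" unfolding k_def by (rule Least_le)
    then show False using j by simp
  qed
  then have "p^j \<le> K" by simp
  then have "p^k \<le> p * K" using j by simp
  then show ?thesis using k1 by blast
qed

lemma card_small_sets: "card {T. T \<subseteq> {..<h::nat} \<and> card T \<le> D} \<le> (h+1)^D"
proof (induction D)
  case 0
  have "{T. T \<subseteq> {..<h} \<and> card T \<le> 0} = {{}}"
    by (auto dest: finite_subset[OF _ finite_lessThan])
  then show ?case by simp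
next
  case (Suc D)
  let ?S = "\<lambda>D. {T. T \<subseteq> {..<h::nat} \<and> card T \<le> D}"
  have fin: "finite (?S D)" by (rule finite_subset[of _ "Pow {..<h}"]) auto
  have "?S (Suc D) \<subseteq> ?S D \<union> (\<lambda>(x,T). insert x T) ` ({..<h} \<times> ?S D)"
  proof
    fix T assume T: "T \<in> ?S (Suc D)"
    show "T \<in> ?S D \<union> (\<lambda>(x,T). insert x T) ` ({..<h} \<times> ?S D)"
    proof (cases "card T \<le> D")
      case True then show ?thesis using T by auto
    next
      case False
      then have cT: "card T = Suc D" using T by auto
      then obtain x where x: "x \<in> T" by (metis card.empty ex_in_conv nat.distinct(1))
      have fT: "finite T" using T by (auto dest: finite_subset[OF _ finite_lessThan])
      have "card (T - {x}) = D" using cT x fT by simp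
      moreover have "T = insert x (T - {x})" using x by auto
      ultimately have "T \<in> (\<lambda>(x,T). insert x T) ` ({..<h} \<times> ?S D)"
        using T x by (intro image_eqI[of _ _ "(x, T - {x})"]) auto
      then show ?thesis by blast
    qed
  qed
  then have "card (?S (Suc D)) \<le> card (?S D \<union> (\<lambda>(x,T). insert x T) ` ({..<h} \<times> ?S D))"
    using fin by (intro card_mono) auto
  also have "\<dots> \<le> card (?S D) + card ((\<lambda>(x,T). insert x T) ` ({..<h} \<times> ?S D))"
    by (rule card_Un_le)
  also have "\<dots> \<le> card (?S D) + card ({..<h} \<times> ?S D)"
    using fin by (intro add_left_mono card_image_le) auto
  also have "\<dots> = (h + 1) * card (?S D)" by (simp add: card_cartesian_product)
  also have "\<dots> \<le> (h+1) * (h+1)^D" by (rule mult_le_mono2) (rule Suc.IH)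
  finally show ?case by simp
qed

lemma rep_F:
  assumes u: "\<forall>i. u i \<subseteq> {..<h::nat}" and q: "q \<le> D + 1"
  shows "rep ((h+1)^D) (\<lambda>i k. Fq q (card (u i - u k)))"
proof -
  define \<T> where "\<T> = {T. T \<subseteq> {..<h} \<and> card T < q}"
  have fin: "finite \<T>" unfolding \<T>_def by (rule finite_subset[of _ "Pow {..<h}"]) auto
  have finT: "\<forall>T\<in>\<T>. finite T" unfolding \<T>_def by (auto dest: finite_subset[OF _ finite_lessThan])
  have r: "rep (card \<T>) (\<lambda>i k. \<Sum>T\<in>\<T>. ((-1)^card T * (if T \<subseteq> u i then 1 else 0)) *
                                (if T \<subseteq> {..<h} - u k then 1 else 0))"
    by (rule rep_sets[OF fin finT])
  have eq: "(\<lambda>i k. \<Sum>T\<in>\<T>. ((-1)^card T * (if T \<subseteq> u i then 1 else 0)) *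
                                (if T \<subseteq> {..<h} - u k then 1 else 0)) = (\<lambda>i k. Fq q (card (u i - u k)))"
  proof (intro ext)
    fix i k
    have Y: "u i - u k \<subseteq> {..<h}" using u by blast
    show "(\<Sum>T\<in>\<T>. ((-1)^card T * (if T \<subseteq> u i then 1 else 0)) *
                                (if T \<subseteq> {..<h} - u k then 1 else 0)) = Fq q (card (u i - u k))"
      unfolding Fq_set[OF finite_lessThan Y] \<T>_def
      by (rule sum.cong) auto
  qed
  have "card \<T> \<le> card {T. T \<subseteq> {..<h} \<and> card T \<le> D}"
    unfolding \<T>_def using q by (intro card_mono) (auto intro: finite_subset[of _ "Pow {..<h}"])
  also have "\<dots> \<le> (h+1)^D" by (rule card_small_sets)
  finally show ?thesis using rep_mono[OF r] eq by simp
qed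

lemma exists_sets:
  assumes "n \<le> h choose w"
  shows "\<exists>u. (\<forall>i. u i \<subseteq> {..<h::nat}) \<and> inj_on u {..<n} \<and> (\<forall>i<n. card (u i) = w)"
proof -
  define \<W> where "\<W> = {T. T \<subseteq> {..<h} \<and> card T = w}"
  have "card \<W> = h choose w" unfolding \<W>_def using n_subsets[of "{..<h}" w] by simp
  then obtain \<V> where V: "\<V> \<subseteq> \<W>" "card \<V> = n" "finite \<V>"
    using assms obtain_subset_with_card_n by metis
  obtain v where v: "bij_betw v {0..<n} \<V>" using ex_bij_betw_nat_finite[OF V(3)] V(2) by auto
  define u where "u i = (if i < n then v i else {})" for i
  have "\<forall>i. u i \<subseteq> {..<h}"
  proof
    fix i show "u i \<subseteq> {..<h}"
    proof (cases "i < n")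
      case True
      then have "v i \<in> \<V>" using v unfolding bij_betw_def by auto
      then show ?thesis using V(1) True unfolding u_def \<W>_def by auto
    qed (simp add: u_def)
  qed
  moreover have "inj_on u {..<n}"
    using v unfolding u_def bij_betw_def inj_on_def by auto
  moreover have "\<forall>i<n. card (u i) = w"
  proof (intro allI impI)
    fix i assume i: "i < n"
    then have "v i \<in> \<V>" using v unfolding bij_betw_def by auto
    then show "card (u i) = w" using V(1) i unfolding u_def \<W>_def by auto
  qed
  ultimately show ?thesis by blast
qed

lemma main_rank:
  assumes m: "m > 1" and K: "K \<ge> 1" and w: "w \<le> K ^ card (prime_factors m)"
    and n: "n \<le> h choose w"
  shows "\<exists>A. rep (m * (h+1)^(m*K*m)) A \<and> (\<forall>i<n. [A i i = 1] (mod int m)) \<and>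
           (\<forall>i<n. \<forall>k<n. i \<noteq> k \<longrightarrow> (\<exists>p\<in>prime_factors m. [A i k = 0] (mod ppow m p)))"
proof -
  define P where "P = prime_factors m"
  have finP: "finite P" unfolding P_def by simp
  have primeP: "\<And>p. p \<in> P \<Longrightarrow> prime p" unfolding P_def by auto
  have leP: "p \<le> m" if "p \<in> P" for p
  proof -
    have "p dvd m" using that unfolding P_def by (simp add: in_prime_factors_iff)
    then show ?thesis by (rule dvd_imp_le) (use m in simp)
  qed
  have Pne: "P \<noteq> {}"
  proof -
    obtain p where "prime p" "p dvd m" using prime_factor_nat[of m] m by auto
    then have "p \<in> P" unfolding P_def using m by (simp add: in_prime_factors_iff)
    then show ?thesis by blast
  qed
  obtain u where u: "\<forall>i. u i \<subseteq> {..<h::nat}" "inj_on u {..<n}" "\<forall>i<n. card (u i) = w"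
    using exists_sets[OF n] by blast
  have exk: "\<forall>p\<in>P. \<exists>k. K < p^k \<and> p^k \<le> p * K" using exists_q[OF primeP K] by simp
  obtain kk where kk: "\<forall>p\<in>P. K < p^(kk p) \<and> p^(kk p) \<le> p * K"
    using bchoice[OF exk] by auto
  define q where "q p = p^(kk p)" for p
  have exM: "\<forall>p\<in>P. \<exists>M. [M = 1] (mod ppow m p) \<and> (\<forall>p'\<in>P. p' \<noteq> p \<longrightarrow> ppow m p' dvd M)"
    using exists_M m unfolding P_def by auto
  obtain M where M: "\<forall>p\<in>P. [M p = 1] (mod ppow m p) \<and> (\<forall>p'\<in>P. p' \<noteq> p \<longrightarrow> ppow m p' dvd M p)"
    using bchoice[OF exM] by auto
  define e where "e p = multiplicity p m" for p
  define A where "A i k = (\<Sum>p\<in>P. M p * Fq (q p) (card (u i - u k)) ^ e p)" for i k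
  have qpos: "q p > 0" if "p \<in> P" for p using primeP[OF that] unfolding q_def by (simp add: prime_gt_0_nat)
  have "rep (\<Sum>p\<in>P. (h+1)^(m*K*m)) (\<lambda>i k. \<Sum>p\<in>P. M p * Fq (q p) (card (u i - u k)) ^ e p)"
  proof (rule rep_sum[OF finP])
    fix p assume p: "p \<in> P"
    have "p * K \<le> m * K" using leP[OF p] by (rule mult_le_mono1)
    moreover have "q p \<le> p * K" using kk p unfolding q_def by blast
    ultimately have "q p \<le> m * K + 1" by linarith
    then have r1: "rep ((h+1)^(m*K)) (\<lambda>i k. Fq (q p) (card (u i - u k)))"
      by (rule rep_F[OF u(1)])
    have "e p < 2 ^ e p" by (rule less_exp)
    also have "(2::nat) ^ e p \<le> p ^ e p" using prime_ge_2_nat[OF primeP[OF p]] by (rule power_mono) simp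
    also have "p ^ e p \<le> m" unfolding e_def by (rule dvd_imp_le[OF multiplicity_dvd]) (use m in simp)
    finally have ep: "e p \<le> m" by simp
    have "((h+1)^(m*K))^(e p) = (h+1)^(m*K*e p)" by (rule power_mult[symmetric])
    also have "\<dots> \<le> (h+1)^(m*K*m)" by (rule power_increasing) (use ep in simp_all)
    finally have "((h+1)^(m*K))^(e p) \<le> (h+1)^(m*K*m)" .
    with rep_pow[OF r1, of "e p"] have "rep ((h+1)^(m*K*m)) (\<lambda>i k. Fq (q p) (card (u i - u k)) ^ e p)"
      by (rule rep_mono)
    then show "rep ((h+1)^(m*K*m)) (\<lambda>i k. M p * Fq (q p) (card (u i - u k)) ^ e p)"
      by (rule rep_scale)
  qed
  moreover have "(\<Sum>p\<in>P. (h+1)^(m*K*m)) \<le> m * (h+1)^(m*K*m)"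
  proof -
    have "P \<subseteq> {1..m}" using leP primeP prime_ge_1_nat by auto
    then have "card P \<le> m" using card_mono[of "{1..m}" P] by simp
    then show ?thesis by (simp add: mult_le_mono1)
  qed
  ultimately have repA: "rep (m * (h+1)^(m*K*m)) A" unfolding A_def[abs_def] by (rule rep_mono)
  have diag: "[A i i = 1] (mod int m)" for i
  proof -
    have "A i i = (\<Sum>p\<in>P. M p)" unfolding A_def using qpos by (simp add: Fq_0)
    also have "[\<dots> = 1] (mod int m)"
    proof (rule cong_all_ppow)
      show "0 < m" using m by simp
      fix p0 assume p0: "p0 \<in> prime_factors m"
      then have p0P: "p0 \<in> P" unfolding P_def .
      have "(\<Sum>p\<in>P. M p) = M p0 + (\<Sum>p\<in>P - {p0}. M p)" using finP p0P by (simp add: sum.remove)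
      also have "[\<dots> = 1 + 0] (mod ppow m p0)"
      proof (rule cong_add)
        show "[M p0 = 1] (mod ppow m p0)" using M p0P by blast
        have "ppow m p0 dvd (\<Sum>p\<in>P - {p0}. M p)" using M p0P by (intro dvd_sum) auto
        then show "[(\<Sum>p\<in>P - {p0}. M p) = 0] (mod ppow m p0)" by (simp add: cong_0_iff)
      qed
      finally show "[(\<Sum>p\<in>P. M p) = 1] (mod ppow m p0)" by simp
    qed
    finally show ?thesis .
  qed
  have offd: "\<exists>p\<in>prime_factors m. [A i k = 0] (mod ppow m p)" if ik: "i < n" "k < n" "i \<noteq> k" for i k
  proof -
    define s where "s = card (u i - u k)"
    have uik: "u i \<noteq> u k" using u(2) ik unfolding inj_on_def by auto
    have finu: "finite (u j)" for j using u(1) finite_subset by blast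
    have spos: "s > 0"
    proof (rule ccontr)
      assume "\<not> s > 0"
      then have "u i - u k = {}" unfolding s_def using finu by simp
      then have "u i \<subseteq> u k" by blast
      moreover have "card (u i) = card (u k)" using u(3) ik by simp
      ultimately have "u i = u k" using card_subset_eq finu by blast
      then show False using uik by simp
    qed
    have sw: "s \<le> w" unfolding s_def using u(3) ik card_mono[OF finu[of i], of "u i - u k"] by auto
    have "K ^ card P < (K+1) ^ card P" using Pne finP by (intro power_strict_mono) auto
    also have "(K+1) ^ card P = (\<Prod>p\<in>P. K+1)" by simp
    also have "\<dots> \<le> (\<Prod>p\<in>P. q p)" using kk unfolding q_def by (intro prod_mono) auto
    finally have Qw: "s < (\<Prod>p\<in>P. q p)" using sw w unfolding P_def by linarith
    have "\<exists>p0\<in>P. \<not> q p0 dvd s"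
    proof (rule ccontr)
      assume "\<not> (\<exists>p0\<in>P. \<not> q p0 dvd s)"
      then have "(\<Prod>p\<in>P. q p) dvd s"
        using finP primeP unfolding q_def
        by (intro prod_dvd_pairwise_coprime_nat) (auto simp: primes_coprime)
      then have "(\<Prod>p\<in>P. q p) \<le> s" using spos by (intro dvd_imp_le) auto
      then show False using Qw by simp
    qed
    then obtain p0 where p0: "p0 \<in> P" "\<not> q p0 dvd s" by blast
    have "[Fq (q p0) s = 0] (mod int p0)" unfolding q_def
      by (rule Fq_nondvd[OF primeP[OF p0(1)]]) (use p0(2) q_def in simp)
    then have "int p0 dvd Fq (q p0) s" by (simp add: cong_0_iff)
    then have "int p0 ^ e p0 dvd Fq (q p0) s ^ e p0" by (rule dvd_power_same)
    then have d0: "ppow m p0 dvd M p0 * Fq (q p0) s ^ e p0" unfolding ppow_def e_def by simp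
    have "A i k = M p0 * Fq (q p0) s ^ e p0 + (\<Sum>p\<in>P - {p0}. M p * Fq (q p) s ^ e p)"
      unfolding A_def s_def using finP p0(1) by (simp add: sum.remove)
    moreover have "ppow m p0 dvd (\<Sum>p\<in>P - {p0}. M p * Fq (q p) s ^ e p)"
      using M p0(1) by (intro dvd_sum) auto
    ultimately have "ppow m p0 dvd A i k" using d0 by simp
    then show ?thesis using p0(1) unfolding P_def by (auto simp: cong_0_iff)
  qed
  show ?thesis using repA diag offd by blast
qed

lemma exp1_lt3: "exp (1::real) < 3"
proof -
  have b: "exp (1/4::real) \<le> 1 + 1/4 + (1/4)^2" by (rule exp_bound) auto
  have "exp (1::real) = exp (real 4 * (1/4))" by simp
  also have "\<dots> = exp (1/4) ^ 4" by (rule exp_of_nat_mult)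
  also have "\<dots> \<le> (1 + 1/4 + (1/4)^2) ^ 4" by (rule power_mono[OF b]) simp
  also have "\<dots> = (21/16::real)^4" by (simp add: power2_eq_square)
  also have "\<dots> < 3" by (simp add: power_divide)
  finally show ?thesis .
qed

lemma ln3_gt1: "ln (3::real) > 1"
proof -
  have "ln (exp 1) < ln (3::real)" using exp1_lt3 by (subst ln_less_cancel_iff) auto
  then show ?thesis by simp
qed

definition Gf :: "nat \<Rightarrow> real \<Rightarrow> real" where
  "Gf r x = root r (ln x * (ln (ln x)) ^ (r - 1))"

lemma Gf_mono:
  assumes r: "r \<ge> 1" and x: "x \<ge> 3"
  shows "Gf r 3 \<le> Gf r x" "Gf r 3 > 0"
proof -
  have l3: "ln (3::real) > 1" by (rule ln3_gt1)
  have lx: "ln 3 \<le> ln x" using x by simp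
  have ll3: "ln (ln (3::real)) > 0" using l3 by simp
  have llx: "ln (ln 3) \<le> ln (ln x)" using lx l3 by (subst ln_le_cancel_iff) auto
  have "ln 3 * (ln (ln 3)) ^ (r - 1) \<le> ln x * (ln (ln x)) ^ (r - 1)"
    using lx llx ll3 l3 by (intro mult_mono power_mono) auto
  then show "Gf r 3 \<le> Gf r x" unfolding Gf_def using r by simp
  show "Gf r 3 > 0" unfolding Gf_def using r l3 ll3 by (intro real_root_gt_zero) auto
qed

lemma KlnK_bound:
  fixes K r n :: nat
  assumes r: "r \<ge> 1" and K: "K \<ge> 2" and n: "n \<ge> 3"
    and minK: "K \<ge> 4 \<Longrightarrow> ((K-1)^r)^((K-1)^r) < n"
  shows "real K * ln (real K) \<le> 4 * Gf r (real n) + 6"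
proof (cases "K \<ge> 4")
  case False
  then have K3: "real K \<le> 3" by simp
  have "ln (real K) \<le> real K - 1" using K by (intro ln_le_minus_one) simp
  then have "ln (real K) \<le> 2" using K3 by simp
  moreover have "ln (real K) \<ge> 0" using K by simp
  ultimately have "real K * ln (real K) \<le> 3 * 2" using K3 by (intro mult_mono) auto
  moreover have "Gf r (real n) \<ge> 0" using Gf_mono[OF r, of "real n"] n by simp
  ultimately show ?thesis by simp
next
  case True
  define a where "a = real (K - 1)"
  have a3: "a \<ge> 3" unfolding a_def using True by simp
  have Ka: "real K = a + 1" unfolding a_def using K by simp
  have lna: "ln a \<ge> 1"
  proof -
    have "ln a \<ge> ln 3" using a3 by simp
    then show ?thesis using ln3_gt1 by simp
  qed
  define L where "L = ln (real n)"
  have L1: "L > a^r * (real r * ln a)"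
  proof -
    have "real (((K-1)^r)^((K-1)^r)) < real n" using minK[OF True] by linarith
    then have "(a^r)^((K-1)^r) < real n" unfolding a_def by simp
    then have "ln ((a^r)^((K-1)^r)) < L" unfolding L_def using a3 n
      by (subst ln_less_cancel_iff) auto
    moreover have "ln ((a^r)^((K-1)^r)) = a^r * (real r * ln a)"
      using a3 by (simp add: ln_realpow a_def)
    ultimately show ?thesis by simp
  qed
  have ar1: "a^r \<ge> 1" using a3 by simp
  have L2: "L \<ge> a^r * ln a"
  proof -
    have "a^r * ln a \<le> a^r * (real r * ln a)" using r lna ar1 by (intro mult_left_mono) auto
    then show ?thesis using L1 by simp
  qed
  have lnL: "ln L \<ge> ln a"
  proof -
    have "a \<le> a^r" using a3 r by (metis One_nat_def le_trans power_increasing power_one_right order.refl less_imp_le numeral_le_one_iff semiring_norm(69) one_le_numeral order_trans[of 1 3 a])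
    also have "\<dots> \<le> a^r * ln a" using lna ar1 by simp
    also have "\<dots> \<le> L" by (rule L2)
    finally have "a \<le> L" .
    then show ?thesis using a3 by simp
  qed
  have "(a * ln a)^r = a^r * ln a * (ln a)^(r-1)"
    using r by (simp add: power_mult_distrib power_Suc[symmetric] mult.assoc)
  also have "\<dots> \<le> L * (ln L)^(r-1)"
  proof -
    have "0 \<le> a^r * ln a" using lna ar1 by simp
    then have L0: "0 \<le> L" using L2 by linarith
    show ?thesis using L2 lnL lna ar1 L0 by (intro mult_mono power_mono) auto
  qed
  finally have "(a * ln a)^r \<le> L * (ln L)^(r-1)" .
  then have "root r ((a * ln a)^r) \<le> Gf r (real n)" unfolding Gf_def L_def using r by simp
  then have G: "a * ln a \<le> Gf r (real n)" using r a3 lna by (simp add: real_root_power_cancel)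
  have "ln (real K) \<le> 2 * ln a"
  proof -
    have "a * 3 \<le> a * a" using a3 by (intro mult_left_mono) auto
    then have "real K \<le> a^2" using Ka a3 unfolding power2_eq_square by linarith
    then have "ln (real K) \<le> ln (a^2)" using K by (subst ln_le_cancel_iff) auto
    then show ?thesis using a3 by (simp add: ln_realpow)
  qed
  then have "real K * ln (real K) \<le> (2 * a) * (2 * ln a)"
    using Ka a3 K by (intro mult_mono) auto
  also have "\<dots> = 4 * (a * ln a)" by simp
  also have "\<dots> \<le> 4 * Gf r (real n)" using G by simp
  finally show ?thesis by simp
qed

lemma single_one_inj:
  assumes "Poly_Mapping.single a (1::nat) = Poly_Mapping.single b 1"
  shows "a = b"
proof (rule ccontr)
  assume ab: "a \<noteq> b"
  from assms have "Poly_Mapping.lookup (Poly_Mapping.single a (1::nat)) a =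
      Poly_Mapping.lookup (Poly_Mapping.single b (1::nat)) a" by (rule arg_cong)
  then show False using ab by (simp add: Poly_Mapping.lookup_single when_def)
qed

lemma single_one_iff [simp]:
  "(Poly_Mapping.single a (1::nat) = Poly_Mapping.single b 1) \<longleftrightarrow> a = b"
  "(Poly_Mapping.single a (Suc 0) = Poly_Mapping.single b (Suc 0)) \<longleftrightarrow> a = b"
  using single_one_inj by auto

lemma CBtX_at:
  assumes "k0 < n"
  shows "CBtX n t C B i j (Poly_Mapping.single (k0,j) 1) = (\<Sum>l<t. C i l * B k0 l)"
proof -
  have "CBtX n t C B i j (Poly_Mapping.single (k0,j) 1) =
        (\<Sum>k<n. if k = k0 then (\<Sum>l<t. C i l * B k l) else 0)"
    unfolding CBtX_def var_def by (intro sum.cong refl) (auto dest: single_one_inj)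
  also have "\<dots> = (\<Sum>l<t. C i l * B k0 l)" using assms by simp
  finally show ?thesis .
qed

lemma CBtX_off:
  assumes "\<forall>k<n. I \<noteq> Poly_Mapping.single (k,j) 1"
  shows "CBtX n t C B i j I = 0"
  unfolding CBtX_def var_def using assms by (intro sum.neutral) auto

lemma var_at: "var i j I = (if I = Poly_Mapping.single (i,j) 1 then 1 else 0)"
  unfolding var_def by simp

lemma card_pf_le: "m > 0 \<Longrightarrow> card (prime_factors m) \<le> m"
proof -
  assume m: "m > 0"
  have "prime_factors m \<subseteq> {1..m}"
  proof
    fix p assume "p \<in> prime_factors m"
    then have "prime p" "p dvd m" by (auto simp: in_prime_factors_iff)
    then show "p \<in> {1..m}" using m by (auto intro: dvd_imp_le simp: prime_ge_1_nat)
  qed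
  then show ?thesis using card_mono[of "{1..m}" "prime_factors m"] by simp
qed

theorem corollary9:
  fixes m :: nat
  assumes "m > 1" and "card (prime_factors m) \<ge> 2"
  shows "\<exists>c::real. c > 0 \<and>
    (\<forall>n::nat. n \<ge> 3 \<longrightarrow>
      (\<exists>(t::nat) (B::nat \<Rightarrow> nat \<Rightarrow> int) (C::nat \<Rightarrow> nat \<Rightarrow> int).
         (\<forall>i<n. \<forall>l<t. B i l \<in> {0..<int m} \<and> C i l \<in> {0..<int m}) \<and>
         real t \<le> exp (c * root (card (prime_factors m))
                    (ln (real n) * (ln (ln (real n))) ^ (card (prime_factors m) - 1))) \<and>
         matrix_one_a_strong_rep m n (CBtX n t C B) \<and>
         (\<forall>i<n. \<exists>coef::nat \<Rightarrow> int. \<forall>j<n. \<forall>I.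
             [CBtX n t C B i j I = (\<Sum>k<n. coef k * var k j I)] (mod int m))))"
proof -
  have m: "m > 1" by (rule assms(1))
  define r where "r = card (prime_factors m)"
  have r2: "r \<ge> 2" unfolding r_def by (rule assms(2))
  have rm: "r \<le> m" unfolding r_def using m card_pf_le by simp
  define C1 :: nat where "C1 = 3 * m * m * m"
  have C1pos: "C1 > 0" unfolding C1_def using m by simp
  define G3 where "G3 = Gf r 3"
  have G3pos: "G3 > 0" unfolding G3_def using r2 Gf_mono(2)[of r 3] by simp
  define c where "c = (ln (real m) + 6 * real C1) / G3 + 4 * real C1"
  have lnm: "ln (real m) \<ge> 0" using m by simp
  have cpos: "c > 0" unfolding c_def using G3pos lnm C1pos by (intro add_nonneg_pos) auto
  have PFne: "prime_factors m \<noteq> {}" using r2 unfolding r_def by auto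
  have main: "\<exists>(t::nat) (B::nat \<Rightarrow> nat \<Rightarrow> int) (C::nat \<Rightarrow> nat \<Rightarrow> int).
         (\<forall>i<n. \<forall>l<t. B i l \<in> {0..<int m} \<and> C i l \<in> {0..<int m}) \<and>
         real t \<le> exp (c * Gf r (real n)) \<and>
         matrix_one_a_strong_rep m n (CBtX n t C B) \<and>
         (\<forall>i<n. \<exists>coef::nat \<Rightarrow> int. \<forall>j<n. \<forall>I.
             [CBtX n t C B i j I = (\<Sum>k<n. coef k * var k j I)] (mod int m))"
    if n3: "n \<ge> 3" for n
  proof -
    define Pk where "Pk K \<longleftrightarrow> 2 \<le> K \<and> n \<le> (K^r)^(K^r)" for K
    have exP: "Pk (max 2 n)"
    proof -
      let ?K = "max 2 n"
      have "n \<le> ?K" by simp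
      also have "?K \<le> ?K^r" using r2 by (intro self_le_power) auto
      also have "?K^r \<le> (?K^r)^(?K^r)"
      proof -
        have "?K > 0" by (simp add: less_max_iff_disj)
        then have "?K^r > 0" by (rule zero_less_power)
        then show ?thesis by (intro self_le_power) auto
      qed
      finally show ?thesis unfolding Pk_def by simp
    qed
    define K where "K = (LEAST K. Pk K)"
    have PK: "Pk K" unfolding K_def by (rule LeastI[of Pk, OF exP])
    then have K2: "K \<ge> 2" and Kn: "n \<le> (K^r)^(K^r)" unfolding Pk_def by auto
    have minK: "((K-1)^r)^((K-1)^r) < n" if "K \<ge> 4"
    proof (rule ccontr)
      assume "\<not> ((K-1)^r)^((K-1)^r) < n"
      then have "Pk (K-1)" unfolding Pk_def using that by simp
      then have "K \<le> K - 1" unfolding K_def by (rule Least_le)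
      then show False using that by simp
    qed
    define w where "w = K^r"
    define h where "h = w * w"
    have w1: "w \<ge> 1" unfolding w_def using K2 by simp
    have nh: "n \<le> h choose w"
    proof -
      have "(real h / real w) ^ w \<le> real (h choose w)"
        unfolding h_def using w1 by (intro binomial_ge_n_over_k_pow_k) simp
      moreover have "real h / real w = real w" unfolding h_def using w1 by simp
      ultimately have "real (w ^ w) \<le> real (h choose w)" by simp
      then have "w ^ w \<le> h choose w" by linarith
      then show ?thesis using Kn unfolding w_def by simp
    qed
    obtain A where A: "rep (m * (h+1)^(m*K*m)) A" "\<forall>i<n. [A i i = 1] (mod int m)"
      "\<forall>i<n. \<forall>k<n. i \<noteq> k \<longrightarrow> (\<exists>p\<in>prime_factors m. [A i k = 0] (mod ppow m p))"
  proof -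
      have "K \<ge> 1" using K2 by simp
      moreover have "w \<le> K ^ card (prime_factors m)" unfolding w_def r_def by simp
      ultimately show ?thesis using main_rank[OF m _ _ nh, of K] that by blast
    qed
    obtain S f g where S: "finite (S::nat set)" "card S \<le> m * (h+1)^(m*K*m)"
      "\<forall>i k. A i k = (\<Sum>x\<in>S. f i x * g k x)"
      using A(1) by (rule repE)
    define t where "t = card S"
    obtain \<phi> where \<phi>: "bij_betw \<phi> {0..<t} S" using ex_bij_betw_nat_finite[OF S(1)] unfolding t_def by blast
    define C where "C i l = f i (\<phi> l) mod int m" for i l
    define B where "B k l = g k (\<phi> l) mod int m" for k l
    define a where "a i k = (\<Sum>l<t. C i l * B k l)" for i k
    have aA: "[a i k = A i k] (mod int m)" for i k
    proof -
      have "[a i k = (\<Sum>l<t. f i (\<phi> l) * g k (\<phi> l))] (mod int m)"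
        unfolding a_def C_def B_def
        by (intro cong_sum cong_mult) (simp_all add: cong_def)
      also have "(\<Sum>l<t. f i (\<phi> l) * g k (\<phi> l)) = (\<Sum>x\<in>S. f i x * g k x)"
        using sum.reindex_bij_betw[OF \<phi>, of "\<lambda>x. f i x * g k x"] by (simp add: atLeast0LessThan)
      also have "\<dots> = A i k" using S(3) by simp
      finally show ?thesis .
    qed
    have entries: "\<forall>i<n. \<forall>l<t. B i l \<in> {0..<int m} \<and> C i l \<in> {0..<int m}"
      unfolding B_def C_def using m by auto
    have tbound: "t \<le> m * K^(C1*K)"
    proof -
      have "h + 1 \<le> K^(2*r+1)"
      proof -
        have "h = K^(2*r)" unfolding h_def w_def by (simp add: power_add[symmetric] mult_2)
        moreover have "K^(2*r) \<ge> 1" using K2 by simp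
        moreover have "K^(2*r+1) = K^(2*r) * K" by simp
        moreover have "K^(2*r) * 2 \<le> K^(2*r) * K" using K2 by (intro mult_le_mono2)
        ultimately show ?thesis by linarith
      qed
      then have "(h+1)^(m*K*m) \<le> (K^(2*r+1))^(m*K*m)" by (rule power_mono) simp
      also have "\<dots> = K^((2*r+1)*(m*K*m))" by (rule power_mult[symmetric])
      also have "\<dots> \<le> K^(C1*K)"
      proof (rule power_increasing)
        have "2*r+1 \<le> 3*m" using rm m by linarith
        then have "(2*r+1)*(m*K*m) \<le> (3*m)*(m*K*m)" by (rule mult_le_mono1)
        then show "(2*r+1)*(m*K*m) \<le> C1*K" unfolding C1_def by (simp add: ac_simps)
      qed (use K2 in simp)
      finally have "(h+1)^(m*K*m) \<le> K^(C1*K)" .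
      then have "m * (h+1)^(m*K*m) \<le> m * K^(C1*K)" by simp
      then show ?thesis using S(2) unfolding t_def by linarith
    qed
    have KlnK: "real K * ln (real K) \<le> 4 * Gf r (real n) + 6"
      by (rule KlnK_bound[OF _ K2 n3 minK]) (use r2 in simp_all)
    have Gn: "Gf r (real n) \<ge> G3" unfolding G3_def using Gf_mono(1)[of r "real n"] r2 n3 by simp
    have "real t \<le> real m * real K ^ (C1*K)" using tbound by (metis of_nat_le_iff of_nat_mult of_nat_power)
    also have "\<dots> = exp (ln (real m) + real C1 * (real K * ln (real K)))"
    proof -
      have Kp: "real K > 0" using K2 by simp
      have "exp (real (C1*K) * ln (real K)) = exp (ln (real K ^ (C1*K)))"
        using Kp by (simp add: ln_realpow)
      also have "\<dots> = real K ^ (C1*K)" using Kp by (intro exp_ln) simp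
      finally have e1: "exp (real (C1*K) * ln (real K)) = real K ^ (C1*K)" .
      have "exp (ln (real m) + real C1 * (real K * ln (real K))) = exp (ln (real m)) * exp (real (C1*K) * ln (real K))"
        by (simp add: exp_add[symmetric] algebra_simps)
      also have "\<dots> = real m * real K ^ (C1*K)" using m e1 by simp
      finally show ?thesis by simp
    qed
    also have "\<dots> \<le> exp (c * Gf r (real n))"
    proof -
      have "real C1 * (real K * ln (real K)) \<le> real C1 * (4 * Gf r (real n) + 6)"
        using KlnK by (intro mult_left_mono) auto
      moreover have "ln (real m) + 6 * real C1 \<le> (ln (real m) + 6 * real C1) / G3 * Gf r (real n)"
      proof -
        have "(ln (real m) + 6 * real C1) / G3 * G3 \<le> (ln (real m) + 6 * real C1) / G3 * Gf r (real n)"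
          using Gn G3pos lnm by (intro mult_left_mono) auto
        then show ?thesis using G3pos by simp
      qed
      ultimately have "ln (real m) + real C1 * (real K * ln (real K)) \<le> c * Gf r (real n)"
        unfolding c_def by (simp add: algebra_simps)
      then show ?thesis by simp
    qed
    finally have tb: "real t \<le> exp (c * Gf r (real n))" .
    have rep: "matrix_one_a_strong_rep m n (CBtX n t C B)"
      unfolding matrix_one_a_strong_rep_def
    proof (intro allI impI)
      fix i j assume i: "i < n" and j: "j < n"
      have pp: "\<And>p x y. [x = y] (mod int m) \<Longrightarrow> [x = y] (mod ppow m p)"
        using ppow_dvd_m cong_dvd_modulus by blast
      obtain p1 where p1: "p1 \<in> prime_factors m" using PFne by blast
      have case1: "[var i j I = CBtX n t C B i j I] (mod int m)" if "I = Poly_Mapping.single (i,j) 1" for I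
      proof -
        have "CBtX n t C B i j I = a i i" unfolding that a_def by (rule CBtX_at[OF i])
        moreover have "var i j I = 1" unfolding that var_def by simp
        moreover have "[a i i = 1] (mod int m)" using aA[of i i] A(2) i cong_trans by blast
        ultimately show ?thesis by (simp add: cong_sym)
      qed
      have case0: "var i j I = 0" if "I \<noteq> Poly_Mapping.single (i,j) 1" for I
        unfolding var_def using that by simp
      show "one_a_strong_rep m (CBtX n t C B i j) (var i j)"
        unfolding one_a_strong_rep_def alt_rep_def
      proof (intro conjI allI impI)
        fix I
        show "\<exists>p\<in>prime_factors m. [var i j I = CBtX n t C B i j I] (mod ppow m p)"
        proof (cases "I = Poly_Mapping.single (i,j) 1")
          case True then show ?thesis using case1 pp p1 by blast
        next
          case False
          show ?thesis
          proof (cases "\<exists>k<n. I = Poly_Mapping.single (k,j) 1")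
            case True
            then obtain k where k: "k < n" "I = Poly_Mapping.single (k,j) 1" by blast
            have ik: "i \<noteq> k" using k False by auto
            obtain p where p: "p \<in> prime_factors m" "[A i k = 0] (mod ppow m p)" using A(3) i k ik by blast
            have "CBtX n t C B i j I = a i k" unfolding k(2) a_def by (rule CBtX_at[OF k(1)])
            then have "[CBtX n t C B i j I = 0] (mod ppow m p)" using pp[OF aA[of i k]] p(2) cong_trans by metis
            then show ?thesis using case0[OF False] p(1) by (metis cong_sym)
          next
            case False2: False
            then have "CBtX n t C B i j I = 0" by (intro CBtX_off) auto
            then show ?thesis using case0[OF False] p1 by auto
          qed
        qed
      next
        fix I
        assume "\<exists>p\<in>prime_factors m. \<not> [var i j I = CBtX n t C B i j I] (mod ppow m p)"
        then show "[var i j I = 0] (mod int m)"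
          using case1 pp case0 by (cases "I = Poly_Mapping.single (i,j) 1") auto
      qed
    qed
    have lin: "\<forall>i<n. \<exists>coef::nat \<Rightarrow> int. \<forall>j<n. \<forall>I.
             [CBtX n t C B i j I = (\<Sum>k<n. coef k * var k j I)] (mod int m)"
    proof (intro allI impI)
      fix i assume "i < n"
      show "\<exists>coef::nat \<Rightarrow> int. \<forall>j<n. \<forall>I. [CBtX n t C B i j I = (\<Sum>k<n. coef k * var k j I)] (mod int m)"
        by (rule exI[of _ "\<lambda>k. \<Sum>l<t. C i l * B k l"]) (simp add: CBtX_def)
    qed
    show ?thesis using entries tb rep lin by blast
  qed
  show ?thesis
    using cpos main unfolding Gf_def r_def by blast
qed

end
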